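(* Let $G$ be a finite group with identity $e$, $R[G]$ its real group algebra, $S=\{x\in R[G]:\sum_gx_g=1,\ x_g\ge0\ \forall g\}$, and $x\in S$. Then (1) $n_{xc_x}\le m_x$; (2) if $n_{xc_x}=n_x$ then $n_x=m_x=m_{xc_x}$.
   Context: $\mathrm{Supp}(y)=\{g:y_g\ne0\}$, $\mathbb N=\{1,2,\dots\}$. For $y\in S$: $n_y=\min\{k\in\mathbb N:(y^k)_e\ne0\}$; $G_y$ is the subgroup generated by $\mathrm{Supp}(y^{n_y})$; $c_y=\frac1{|G_y|}\sum_{g\in G_y}g$; $m_y=\min\{k\in\mathbb N:\mathrm{Supp}(y^k)\subset G_y\}$. Note $xc_x\in S$. *)

theory Defs
  imports "HOL-Algebra.Algebra"
begin

text \<open>Elements of the real group algebra R[G] of a finite group G are modelled as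
functions from the carrier to the reals, vanishing outside the carrier.\<close>

definition ga_mult :: "('a, 'b) monoid_scheme \<Rightarrow> ('a \<Rightarrow> real) \<Rightarrow> ('a \<Rightarrow> real) \<Rightarrow> ('a \<Rightarrow> real)" where
  "ga_mult G x y = (\<lambda>g. if g \<in> carrier G
      then (\<Sum>h\<in>carrier G. x h * y (inv\<^bsub>G\<^esub> h \<otimes>\<^bsub>G\<^esub> g)) else 0)"

definition ga_one :: "('a, 'b) monoid_scheme \<Rightarrow> ('a \<Rightarrow> real)" where
  "ga_one G = (\<lambda>g. if g = \<one>\<^bsub>G\<^esub> then 1 else 0)"

primrec ga_pow :: "('a, 'b) monoid_scheme \<Rightarrow> ('a \<Rightarrow> real) \<Rightarrow> nat \<Rightarrow> ('a \<Rightarrow> real)" where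
  "ga_pow G x 0 = ga_one G"
| "ga_pow G x (Suc k) = ga_mult G (ga_pow G x k) x"

definition Supp :: "('a, 'b) monoid_scheme \<Rightarrow> ('a \<Rightarrow> real) \<Rightarrow> 'a set" where
  "Supp G y = {g \<in> carrier G. y g \<noteq> 0}"

definition simplexS :: "('a, 'b) monoid_scheme \<Rightarrow> ('a \<Rightarrow> real) set" where
  "simplexS G = {x. (\<forall>g. g \<notin> carrier G \<longrightarrow> x g = 0) \<and> (\<forall>g \<in> carrier G. x g \<ge> 0)
                    \<and> (\<Sum>g\<in>carrier G. x g) = 1}"

definition n_of :: "('a, 'b) monoid_scheme \<Rightarrow> ('a \<Rightarrow> real) \<Rightarrow> nat" where
  "n_of G y = (LEAST k. k \<ge> 1 \<and> ga_pow G y k \<one>\<^bsub>G\<^esub> \<noteq> 0)"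

definition G_of :: "('a, 'b) monoid_scheme \<Rightarrow> ('a \<Rightarrow> real) \<Rightarrow> 'a set" where
  "G_of G y = generate G (Supp G (ga_pow G y (n_of G y)))"

definition c_of :: "('a, 'b) monoid_scheme \<Rightarrow> ('a \<Rightarrow> real) \<Rightarrow> ('a \<Rightarrow> real)" where
  "c_of G y = (\<lambda>g. if g \<in> G_of G y then 1 / real (card (G_of G y)) else 0)"

definition m_of :: "('a, 'b) monoid_scheme \<Rightarrow> ('a \<Rightarrow> real) \<Rightarrow> nat" where
  "m_of G y = (LEAST k. k \<ge> 1 \<and> Supp G (ga_pow G y k) \<subseteq> G_of G y)"

end

theory Submission
  imports Defs
begin

definition sm :: "('a,'b) monoid_scheme \<Rightarrow> 'a set \<Rightarrow> 'a set \<Rightarrow> 'a set" where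
  "sm G P Q = {p \<otimes>\<^bsub>G\<^esub> q | p q. p \<in> P \<and> q \<in> Q}"

primrec spow :: "('a,'b) monoid_scheme \<Rightarrow> 'a set \<Rightarrow> nat \<Rightarrow> 'a set" where
  "spow G A 0 = {\<one>\<^bsub>G\<^esub>}"
| "spow G A (Suc k) = sm G (spow G A k) A"

context group begin

lemma sm_carrier: "P \<subseteq> carrier G \<Longrightarrow> Q \<subseteq> carrier G \<Longrightarrow> sm G P Q \<subseteq> carrier G"
  unfolding sm_def by auto

lemma sm_assoc: "P \<subseteq> carrier G \<Longrightarrow> Q \<subseteq> carrier G \<Longrightarrow> R \<subseteq> carrier G \<Longrightarrow>
   sm G (sm G P Q) R = sm G P (sm G Q R)"
  unfolding sm_def
  apply (auto simp: m_assoc)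
   apply (metis m_assoc subsetD)
  apply (metis m_assoc subsetD)
  done

lemma sm_one_left: "P \<subseteq> carrier G \<Longrightarrow> sm G {\<one>} P = P"
  unfolding sm_def by force

lemma sm_one_right: "P \<subseteq> carrier G \<Longrightarrow> sm G P {\<one>} = P"
  unfolding sm_def by force

lemma spow_carrier: "A \<subseteq> carrier G \<Longrightarrow> spow G A k \<subseteq> carrier G"
  by (induction k) (auto simp: sm_carrier)

lemma spow_add: "A \<subseteq> carrier G \<Longrightarrow> spow G A (i + j) = sm G (spow G A i) (spow G A j)"
proof (induction j)
  case 0 then show ?case by (simp add: sm_one_right spow_carrier)
next
  case (Suc j) then show ?case by (simp add: sm_assoc spow_carrier)
qed

lemma spow_one: "A \<subseteq> carrier G \<Longrightarrow> spow G A 1 = A"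
  by (simp add: sm_one_left)

lemma spow_Suc_left: "A \<subseteq> carrier G \<Longrightarrow> spow G A (Suc k) = sm G A (spow G A k)"
proof -
  assume A: "A \<subseteq> carrier G"
  have "spow G A (1 + k) = sm G (spow G A 1) (spow G A k)" by (rule spow_add[OF A])
  then show ?thesis using spow_one[OF A] by simp
qed

lemma pow_in_spow: "A \<subseteq> carrier G \<Longrightarrow> a \<in> A \<Longrightarrow> a [^] k \<in> spow G A k"
  by (induction k) (auto simp: sm_def)

lemma spow_mult: "A \<subseteq> carrier G \<Longrightarrow> spow G (spow G A n) j = spow G A (j * n)"
proof (induction j)
  case 0 then show ?case by simp
next
  case (Suc j)
  then show ?case by (simp add: spow_add[symmetric] add.commute)
qed

lemma generate_spow:
  assumes fin: "finite (carrier G)" and A: "A \<subseteq> carrier G" and one: "\<one> \<in> spow G A n"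
  shows "generate G (spow G A n) = {g. \<exists>j. g \<in> spow G A (j * n)}"
proof
  let ?T = "{g. \<exists>j. g \<in> spow G A (j * n)}"
  have Tc: "?T \<subseteq> carrier G" using spow_carrier[OF A] by blast
  have Tm: "x \<otimes> y \<in> ?T" if xT: "x \<in> ?T" and yT: "y \<in> ?T" for x y
  proof -
    obtain i j where "x \<in> spow G A (i*n)" "y \<in> spow G A (j*n)" using xT yT by blast
    then have "x \<otimes> y \<in> spow G A (i*n + j*n)" by (auto simp: spow_add[OF A] sm_def)
    then show ?thesis by (metis (mono_tags) add_mult_distrib mem_Collect_eq)
  qed
  have T1: "\<one> \<in> ?T" by (metis (mono_tags) mem_Collect_eq mult_0 singletonI spow.simps(1))
  have Tp: "x [^] (k::nat) \<in> ?T" if "x \<in> ?T" for x k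
    by (induction k) (use T1 Tm that in auto)
  have Ti: "inv x \<in> ?T" if "x \<in> ?T" for x
  proof -
    have xc: "x \<in> carrier G" using that Tc by blast
    have "x [^] (order G - 1) \<otimes> x = x [^] order G"
    proof (cases "order G")
      case 0 then show ?thesis
        using fin order_gt_0_iff_finite by simp
    next
      case (Suc k) then show ?thesis using xc by (simp add: nat_pow_Suc)
    qed
    also have "\<dots> = \<one>" using pow_order_eq_1 xc by simp
    finally have "inv x = x [^] (order G - 1)" using xc
      by (metis inv_equality nat_pow_closed)
    then show ?thesis using Tp that by simp
  qed
  have sub: "subgroup ?T G" by (rule subgroup.intro[OF Tc Tm T1 Ti])
  have "spow G A n \<subseteq> ?T" by (metis (mono_tags, lifting) mem_Collect_eq mult_1 subsetI)
  then show "generate G (spow G A n) \<subseteq> ?T" using generate_subgroup_incl[OF _ sub] by blast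
next
  let ?S = "spow G A n"
  have Sc: "?S \<subseteq> carrier G" using spow_carrier[OF A] .
  have "spow G ?S j \<subseteq> generate G ?S" for j
  proof (induction j)
    case 0 then show ?case by (simp add: generate.one)
  next
    case (Suc j) then show ?case by (auto simp: sm_def generate.incl generate.eng)
  qed
  then show "{g. \<exists>j. g \<in> spow G A (j * n)} \<subseteq> generate G ?S"
    using spow_mult[OF A] by auto
qed

lemma set_main:
  assumes fin: "finite (carrier G)" and A: "A \<subseteq> carrier G" and Ane: "A \<noteq> {}"
  defines "n \<equiv> LEAST k. k \<ge> 1 \<and> \<one> \<in> spow G A k"
  defines "H \<equiv> generate G (spow G A n)"
  defines "m \<equiv> LEAST k. k \<ge> 1 \<and> spow G A k \<subseteq> H"
  defines "B \<equiv> sm G A H"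
  defines "nB \<equiv> LEAST k. k \<ge> 1 \<and> \<one> \<in> spow G B k"
  defines "H' \<equiv> generate G (spow G B nB)"
  defines "mB \<equiv> LEAST k. k \<ge> 1 \<and> spow G B k \<subseteq> H'"
  shows "nB \<le> m \<and> (nB = n \<longrightarrow> n = m \<and> m = mB)"
proof -
  obtain a where a: "a \<in> A" using Ane by blast
  have ac: "a \<in> carrier G" using a A by blast
  have o1: "order G \<ge> 1" using fin order_gt_0_iff_finite by simp
  have "\<one> \<in> spow G A (order G)" using pow_in_spow[OF A a, of "order G"] pow_order_eq_1[OF ac] by simp
  then have ex: "order G \<ge> 1 \<and> \<one> \<in> spow G A (order G)" using o1 by simp
  have "n \<ge> 1 \<and> \<one> \<in> spow G A n" unfolding n_def using ex by (rule LeastI)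
  then have n1: "n \<ge> 1" and onen: "\<one> \<in> spow G A n" by auto
  have Sc: "spow G A k \<subseteq> carrier G" for k using spow_carrier[OF A] .
  have Hsub: "subgroup H G" unfolding H_def by (rule generate_is_subgroup[OF Sc])
  have Hc: "H \<subseteq> carrier G" using subgroup.subset[OF Hsub] by blast
  have SnH: "spow G A n \<subseteq> H" unfolding H_def using generate.incl[of _ "spow G A n" G] by blast
  have P: "n \<ge> 1 \<and> spow G A n \<subseteq> H" using n1 SnH by simp
  have "m \<ge> 1 \<and> spow G A m \<subseteq> H" unfolding m_def using P by (rule LeastI)
  then have m1: "m \<ge> 1" and SmH: "spow G A m \<subseteq> H" by auto
  have mn: "m \<le> n" unfolding m_def using P by (rule Least_le)
  have Hform: "H = {g. \<exists>j. g \<in> spow G A (j * n)}"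
    unfolding H_def by (rule generate_spow[OF fin A onen])
  have comm1: "sm G A H \<subseteq> sm G H A"
  proof
    fix g assume "g \<in> sm G A H"
    then obtain b h j where g: "g = b \<otimes> h" "b \<in> A" "h \<in> spow G A (j*n)"
      unfolding sm_def Hform by blast
    then have "g \<in> sm G A (spow G A (j*n))" unfolding sm_def by blast
    also have "\<dots> = sm G (spow G A (j*n)) A" using spow_Suc_left[OF A] by (metis spow.simps(2))
    also have "\<dots> \<subseteq> sm G H A" unfolding sm_def Hform by blast
    finally show "g \<in> sm G H A" .
  qed
  have comm2: "sm G H A \<subseteq> sm G A H"
  proof
    fix g assume "g \<in> sm G H A"
    then obtain b h j where g: "g = h \<otimes> b" "b \<in> A" "h \<in> spow G A (j*n)"
      unfolding sm_def Hform by blast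
    then have "g \<in> sm G (spow G A (j*n)) A" unfolding sm_def by blast
    also have "\<dots> = sm G A (spow G A (j*n))" using spow_Suc_left[OF A] by (metis spow.simps(2))
    also have "\<dots> \<subseteq> sm G A H" unfolding sm_def Hform by blast
    finally show "g \<in> sm G A H" .
  qed
  have comm: "sm G A H = sm G H A" using comm1 comm2 by blast
  have HH: "sm G H H = H"
  proof
    show "sm G H H \<subseteq> H" unfolding sm_def using subgroup.m_closed[OF Hsub] by blast
    show "H \<subseteq> sm G H H" unfolding sm_def
    proof
      fix h assume h: "h \<in> H"
      then have "h = h \<otimes> \<one>" using Hc by auto
      then show "h \<in> {p \<otimes> q |p q. p \<in> H \<and> q \<in> H}" using h subgroup.one_closed[OF Hsub] by blast
    qed
  qed
  have Bpow: "spow G B k = sm G (spow G A k) H" if "k \<ge> 1" for k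
    using that
  proof (induction k)
    case 0 then show ?case by simp
  next
    case (Suc k)
    show ?case
    proof (cases "k = 0")
      case True then show ?thesis unfolding B_def using spow_one[OF A] by (simp add: sm_one_left sm_carrier A Hc)
    next
      case False
      then have IH: "spow G B k = sm G (spow G A k) H" using Suc by simp
      have "spow G B (Suc k) = sm G (sm G (spow G A k) H) (sm G A H)" using IH B_def by simp
      also have "\<dots> = sm G (spow G A k) (sm G H (sm G A H))" by (simp add: sm_assoc Sc Hc A sm_carrier)
      also have "\<dots> = sm G (spow G A k) (sm G (sm G H A) H)" by (simp add: sm_assoc Sc Hc A sm_carrier)
      also have "\<dots> = sm G (spow G A k) (sm G (sm G A H) H)" using comm by simp
      also have "\<dots> = sm G (spow G A k) (sm G A (sm G H H))" by (simp add: sm_assoc Sc Hc A sm_carrier)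
      also have "\<dots> = sm G (sm G (spow G A k) A) H" using HH by (simp add: sm_assoc Sc Hc A sm_carrier)
      finally show ?thesis by simp
    qed
  qed
  have key: "sm G (spow G A k) H \<subseteq> H \<longleftrightarrow> spow G A k \<subseteq> H" for k
  proof
    assume h: "sm G (spow G A k) H \<subseteq> H"
    show "spow G A k \<subseteq> H"
    proof
      fix g assume g: "g \<in> spow G A k"
      then have "g \<in> carrier G" using Sc by blast
      then have "g = g \<otimes> \<one>" by simp
      then have "g \<in> sm G (spow G A k) H" unfolding sm_def using g subgroup.one_closed[OF Hsub] by blast
      then show "g \<in> H" using h by blast
    qed
  next
    assume "spow G A k \<subseteq> H"
    then show "sm G (spow G A k) H \<subseteq> H" unfolding sm_def using subgroup.m_closed[OF Hsub] by blast
  qed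
  have "\<one> \<in> sm G (spow G A m) H"
  proof -
    have g: "a [^] m \<in> spow G A m" by (rule pow_in_spow[OF A a])
    then have gH: "a [^] m \<in> H" using SmH by blast
    then have "inv (a [^] m) \<in> H" using subgroup.m_inv_closed[OF Hsub] by blast
    moreover have "a [^] m \<otimes> inv (a [^] m) = \<one>" using ac by simp
    ultimately show ?thesis unfolding sm_def using g by force
  qed
  then have "\<one> \<in> spow G B m" using Bpow[OF m1] by simp
  then have nBm: "nB \<le> m" unfolding nB_def using m1 by (simp add: Least_le)
  moreover have "n = m \<and> m = mB" if eq: "nB = n"
  proof -
    have nm: "n = m" using nBm eq mn by simp
    have "sm G (spow G A n) H = H"
    proof
      show "sm G (spow G A n) H \<subseteq> H" using key SnH by blast
      show "H \<subseteq> sm G (spow G A n) H"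
      proof
        fix h assume h: "h \<in> H"
        then have "h = \<one> \<otimes> h" using Hc by auto
        then show "h \<in> sm G (spow G A n) H" unfolding sm_def using h onen by blast
      qed
    qed
    then have "H' = generate G H" unfolding H'_def eq using Bpow[OF n1] by simp
    also have "\<dots> = H"
      using generate_subgroup_incl[OF _ Hsub, of H] generate.incl[of _ H G] by blast
    finally have H'H: "H' = H" .
    have eqk: "(k \<ge> 1 \<and> spow G B k \<subseteq> H') \<longleftrightarrow> (k \<ge> 1 \<and> spow G A k \<subseteq> H)" for k
      using Bpow[of k] key[of k] H'H by auto
    have "mB = m" unfolding mB_def m_def eqk by (rule refl)
    then show ?thesis using nm by simp
  qed
  ultimately show ?thesis by blast
qed

end

definition nn :: "('a,'b) monoid_scheme \<Rightarrow> ('a \<Rightarrow> real) \<Rightarrow> bool" where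
  "nn G x \<longleftrightarrow> (\<forall>g. x g \<ge> 0) \<and> (\<forall>g. g \<notin> carrier G \<longrightarrow> x g = 0)"

context group begin

lemma nn_mult:
  assumes fin: "finite (carrier G)" and x: "nn G x" and y: "nn G y"
  shows "nn G (ga_mult G x y) \<and> Supp G (ga_mult G x y) = sm G (Supp G x) (Supp G y)"
proof
  show "nn G (ga_mult G x y)" using x y unfolding nn_def ga_mult_def
    by (auto intro!: sum_nonneg mult_nonneg_nonneg)
  show "Supp G (ga_mult G x y) = sm G (Supp G x) (Supp G y)"
  proof (rule Set.set_eqI)
    fix g
    show "g \<in> Supp G (ga_mult G x y) \<longleftrightarrow> g \<in> sm G (Supp G x) (Supp G y)"
    proof (cases "g \<in> carrier G")
      case False then show ?thesis unfolding Supp_def sm_def by auto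
    next
      case gc: True
      have nonneg: "\<And>h. h \<in> carrier G \<Longrightarrow> 0 \<le> x h * y (inv h \<otimes> g)"
        using x y unfolding nn_def by auto
      have "g \<in> Supp G (ga_mult G x y) \<longleftrightarrow> (\<exists>h\<in>carrier G. x h * y (inv h \<otimes> g) \<noteq> 0)"
        unfolding Supp_def ga_mult_def using gc sum_nonneg_eq_0_iff[OF fin nonneg] by auto
      also have "\<dots> \<longleftrightarrow> g \<in> sm G (Supp G x) (Supp G y)"
      proof
        assume "\<exists>h\<in>carrier G. x h * y (inv h \<otimes> g) \<noteq> 0"
        then obtain h where h: "h \<in> carrier G" "x h \<noteq> 0" "y (inv h \<otimes> g) \<noteq> 0" by auto
        have "g = h \<otimes> (inv h \<otimes> g)" using h gc by (simp add: m_assoc[symmetric])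
        moreover have "h \<in> Supp G x" "inv h \<otimes> g \<in> Supp G y" using h gc unfolding Supp_def by auto
        ultimately show "g \<in> sm G (Supp G x) (Supp G y)" unfolding sm_def by blast
      next
        assume "g \<in> sm G (Supp G x) (Supp G y)"
        then obtain a b where ab: "g = a \<otimes> b" "a \<in> Supp G x" "b \<in> Supp G y" unfolding sm_def by blast
        then have ac: "a \<in> carrier G" and bc: "b \<in> carrier G" unfolding Supp_def by auto
        have "inv a \<otimes> g = b" using ab ac bc by (simp add: m_assoc[symmetric])
        then show "\<exists>h\<in>carrier G. x h * y (inv h \<otimes> g) \<noteq> 0" using ab ac unfolding Supp_def by auto
      qed
      finally show ?thesis .
    qed
  qed
qed

lemma nn_one: "nn G (ga_one G) \<and> Supp G (ga_one G) = {\<one>}"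
  unfolding nn_def ga_one_def Supp_def by auto

lemma nn_pow:
  assumes fin: "finite (carrier G)" and x: "nn G x"
  shows "nn G (ga_pow G x k) \<and> Supp G (ga_pow G x k) = spow G (Supp G x) k"
proof (induction k)
  case 0 then show ?case using nn_one by simp
next
  case (Suc k) then show ?case using nn_mult[OF fin _ x] by simp
qed

lemma n_eq:
  assumes fin: "finite (carrier G)" and x: "nn G x"
  shows "n_of G x = (LEAST k. k \<ge> 1 \<and> \<one> \<in> spow G (Supp G x) k)"
proof -
  have "ga_pow G x k \<one> \<noteq> 0 \<longleftrightarrow> \<one> \<in> spow G (Supp G x) k" for k
    using nn_pow[OF fin x, of k] unfolding Supp_def by auto
  then show ?thesis unfolding n_of_def by simp
qed

lemma G_eq:
  assumes fin: "finite (carrier G)" and x: "nn G x"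
  shows "G_of G x = generate G (spow G (Supp G x) (n_of G x))"
  unfolding G_of_def using nn_pow[OF fin x] by simp

lemma m_eq:
  assumes fin: "finite (carrier G)" and x: "nn G x"
  shows "m_of G x = (LEAST k. k \<ge> 1 \<and> spow G (Supp G x) k \<subseteq> G_of G x)"
  unfolding m_of_def using nn_pow[OF fin x] by simp

lemma c_nn:
  assumes fin: "finite (carrier G)" and x: "nn G x"
  shows "nn G (c_of G x) \<and> Supp G (c_of G x) = G_of G x"
proof -
  have Sx: "Supp G x \<subseteq> carrier G" unfolding Supp_def by auto
  have Hc: "G_of G x \<subseteq> carrier G" unfolding G_eq[OF fin x]
    by (rule generate_incl[OF spow_carrier[OF Sx]])
  have "\<one> \<in> G_of G x" unfolding G_of_def by (rule generate.one)
  then have "card (G_of G x) > 0" using Hc fin by (metis card_gt_0_iff empty_iff finite_subset)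
  then show ?thesis unfolding nn_def c_of_def Supp_def using Hc by auto
qed

end

theorem proposition4:
  fixes G :: "('a, 'b) monoid_scheme" and x :: "'a \<Rightarrow> real"
  assumes "group G" and "finite (carrier G)" and "x \<in> simplexS G"
  shows "n_of G (ga_mult G x (c_of G x)) \<le> m_of G x
     \<and> (n_of G (ga_mult G x (c_of G x)) = n_of G x \<longrightarrow>
          n_of G x = m_of G x \<and> m_of G x = m_of G (ga_mult G x (c_of G x)))"
proof -
  interpret group G by fact
  note fin = assms(2)
  have x: "nn G x" using assms(3) unfolding simplexS_def nn_def by auto
  have A: "Supp G x \<subseteq> carrier G" unfolding Supp_def by auto
  have Ane: "Supp G x \<noteq> {}"
  proof
    assume "Supp G x = {}"
    then have "\<forall>g\<in>carrier G. x g = 0" unfolding Supp_def by auto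
    then have "(\<Sum>g\<in>carrier G. x g) = 0" by simp
    then show False using assms(3) unfolding simplexS_def by simp
  qed
  have c: "nn G (c_of G x)" and Sc: "Supp G (c_of G x) = G_of G x" using c_nn[OF fin x] by auto
  define y where "y = ga_mult G x (c_of G x)"
  have y: "nn G y" and Sy: "Supp G y = sm G (Supp G x) (G_of G x)"
    using nn_mult[OF fin x c] Sc unfolding y_def by auto
  have "n_of G y \<le> m_of G x \<and> (n_of G y = n_of G x \<longrightarrow> n_of G x = m_of G x \<and> m_of G x = m_of G y)"
    unfolding m_eq[OF fin x] m_eq[OF fin y] G_eq[OF fin y] n_eq[OF fin y] Sy
      G_eq[OF fin x] n_eq[OF fin x]
    by (rule set_main[OF fin A Ane])
  then show ?thesis unfolding y_def .
qed

end
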